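(* Let $Q$ be a quantale, $M$ a shrinkable $Q$-module, and $\mathcal{F},\mathcal{G}\in\operatorname{mF}(Q)$ such that $\mathcal{F}+\mathcal{G}$ is 1-step over $M$. Then: (a) if there exists $\mathcal{H}\in\operatorname{mF}(Q)$ localizable over $M$ with $\mathcal{F}\cap\mathcal{G}\subseteq\mathcal{H}\subseteq\mathcal{F}$, then $\mathcal{F}$ is localizable over $M$; (b) if $sm=m$ for all $s\in\mathcal{F}\cap\mathcal{G}$ and $m\in M$, then both $\mathcal{F}$ and $\mathcal{G}$ are 1-step over $M$.
   Context: A quantale is a poset $Q$ in which every nonempty subset has a join $\sum$ (binary join $a+b$; no bottom required), with top $1$ and a commutative associative multiplication with unit $1$ distributing over nonempty joins. A $Q$-module is a poset $M$ with all nonempty joins and an associative unital action $Q\times M\to M$ distributing over nonempty joins in each variable. A multiplicative filter (m-filter) is a subset of $Q$ containing $1$, upward closed and closed under multiplication; $\operatorname{mF}(Q)$ is the set of them; $\mathcal{F}+\mathcal{G}$ is the smallest m-filter containing $\mathcal{F}\cup\mathcal{G}$. For $x,x_i$ write $x\le^*\sum_{i\in I}x_i$ if $x\le\sum_{i\in I_0}x_i$ for a finite nonempty $I_0\subseteq I$. $M$ is shrinkable if whenever $x\le\sum_ix_i$ there is a family $(y_j)$ with $x=\sum_jy_j$ and each $y_j\le^*\sum_ix_i$. For $a,b\in M$: $a\preceq^1_\mathcal{F}b$ means there are families $(a_i)$ in $M$, $(s_i)$ in $\mathcal{F}$ with $a\le\sum_ia_i$, $s_ia_i\le b$; $a\preceq^n_\mathcal{F}b$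 means a chain of $n$ such steps through elements of $M$; $a\preceq_\mathcal{F}b$ means $a\preceq^n_\mathcal{F}b$ for some $n\ge1$. $\mathcal{F}$ is localizable over $M$ if for each $b\in M$ there is $n_b\in\mathbb{N}$ with $a\preceq_\mathcal{F}b\Rightarrow a\preceq^{n_b}_\mathcal{F}b$ for all $a$; $\mathcal{F}$ is 1-step over $M$ if it is localizable over $M$ and $a\preceq_\mathcal{F}b$ implies $a\preceq^1_\mathcal{F}b$. *)

theory Defs
  imports Main
begin

definition is_join :: "'a::order set \<Rightarrow> 'a \<Rightarrow> bool" where
  "is_join S x \<longleftrightarrow> (\<forall>y\<in>S. y \<le> x) \<and> (\<forall>z. (\<forall>y\<in>S. y \<le> z) \<longrightarrow> x \<le> z)"

definition has_ne_joins :: "'a::order itself \<Rightarrow> bool" where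
  "has_ne_joins _ \<longleftrightarrow> (\<forall>S::'a set. S \<noteq> {} \<longrightarrow> (\<exists>x. is_join S x))"

definition Join :: "'a::order set \<Rightarrow> 'a" where
  "Join S = (THE x. is_join S x)"

definition quantale :: "('q::order \<Rightarrow> 'q \<Rightarrow> 'q) \<Rightarrow> 'q \<Rightarrow> bool" where
  "quantale mult e \<longleftrightarrow>
     has_ne_joins TYPE('q) \<and>
     (\<forall>x. x \<le> e) \<and>
     (\<forall>a b. mult a b = mult b a) \<and>
     (\<forall>a b c. mult (mult a b) c = mult a (mult b c)) \<and>
     (\<forall>a. mult e a = a) \<and>
     (\<forall>a S. S \<noteq> {} \<longrightarrow> mult a (Join S) = Join (mult a ` S))"

definition qmodule ::
  "('q::order \<Rightarrow> 'q \<Rightarrow> 'q) \<Rightarrow> 'q \<Rightarrow> ('q \<Rightarrow> 'm::order \<Rightarrow> 'm) \<Rightarrow> bool" where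
  "qmodule mult e act \<longleftrightarrow>
     has_ne_joins TYPE('m) \<and>
     (\<forall>a b m. act (mult a b) m = act a (act b m)) \<and>
     (\<forall>m. act e m = m) \<and>
     (\<forall>S m. S \<noteq> {} \<longrightarrow> act (Join S) m = Join ((\<lambda>a. act a m) ` S)) \<and>
     (\<forall>a T. T \<noteq> {} \<longrightarrow> act a (Join T) = Join (act a ` T))"

definition le_star :: "'m::order \<Rightarrow> 'i set \<Rightarrow> ('i \<Rightarrow> 'm) \<Rightarrow> bool" where
  "le_star x I xs \<longleftrightarrow> (\<exists>I0. I0 \<subseteq> I \<and> finite I0 \<and> I0 \<noteq> {} \<and> x \<le> Join (xs ` I0))"

text \<open>Shrinkable: families are represented by (nonempty) index sets of type 'm
  together with an indexing function; the covering family (y_j) likewise.\<close>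
definition shrinkable :: "'m::order itself \<Rightarrow> bool" where
  "shrinkable _ \<longleftrightarrow>
     (\<forall>(x::'m) (I::'m set) xs. I \<noteq> {} \<longrightarrow> x \<le> Join (xs ` I) \<longrightarrow>
        (\<exists>(J::'m set) ys. J \<noteq> {} \<and> x = Join (ys ` J) \<and> (\<forall>j\<in>J. le_star (ys j) I xs)))"

definition mfilter :: "('q::order \<Rightarrow> 'q \<Rightarrow> 'q) \<Rightarrow> 'q \<Rightarrow> 'q set \<Rightarrow> bool" where
  "mfilter mult e F \<longleftrightarrow> e \<in> F \<and> (\<forall>x y. x \<in> F \<longrightarrow> x \<le> y \<longrightarrow> y \<in> F) \<and>
     (\<forall>x y. x \<in> F \<longrightarrow> y \<in> F \<longrightarrow> mult x y \<in> F)"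

definition mfsum :: "('q::order \<Rightarrow> 'q \<Rightarrow> 'q) \<Rightarrow> 'q \<Rightarrow> 'q set \<Rightarrow> 'q set \<Rightarrow> 'q set" where
  "mfsum mult e F G = \<Inter>{H. mfilter mult e H \<and> F \<union> G \<subseteq> H}"

text \<open>a \<preceq>^1_F b: families (a_i),(s_i) indexed by a nonempty set I
  (index type 'm \<times> 'q, large enough for any family) with a \<le> \<Sum> a_i and s_i a_i \<le> b.\<close>
definition prec1 :: "('q::order \<Rightarrow> 'm::order \<Rightarrow> 'm) \<Rightarrow> 'q set \<Rightarrow> 'm \<Rightarrow> 'm \<Rightarrow> bool" where
  "prec1 act F a b \<longleftrightarrow>
     (\<exists>(I::('m \<times> 'q) set) as s. I \<noteq> {} \<and> a \<le> Join (as ` I) \<and>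
        (\<forall>i\<in>I. s i \<in> F \<and> act (s i) (as i) \<le> b))"

definition precn :: "('q::order \<Rightarrow> 'm::order \<Rightarrow> 'm) \<Rightarrow> 'q set \<Rightarrow> nat \<Rightarrow> 'm \<Rightarrow> 'm \<Rightarrow> bool" where
  "precn act F n = (prec1 act F ^^ n)"

definition prec :: "('q::order \<Rightarrow> 'm::order \<Rightarrow> 'm) \<Rightarrow> 'q set \<Rightarrow> 'm \<Rightarrow> 'm \<Rightarrow> bool" where
  "prec act F a b \<longleftrightarrow> (\<exists>n\<ge>1. precn act F n a b)"

definition localizable :: "('q::order \<Rightarrow> 'm::order \<Rightarrow> 'm) \<Rightarrow> 'q set \<Rightarrow> bool" where
  "localizable act F \<longleftrightarrow>
     (\<forall>b. \<exists>n\<ge>1. \<forall>a. prec act F a b \<longrightarrow> precn act F n a b)"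

definition one_step :: "('q::order \<Rightarrow> 'm::order \<Rightarrow> 'm) \<Rightarrow> 'q set \<Rightarrow> bool" where
  "one_step act F \<longleftrightarrow> localizable act F \<and> (\<forall>a b. prec act F a b \<longrightarrow> prec1 act F a b)"

end

theory Submission
  imports Defs
begin

lemma Join_eq: "is_join S (x::'a::order) \<Longrightarrow> Join S = x"
  unfolding Join_def
proof (rule the_equality)
  fix y assume "is_join S x" "is_join S y"
  then show "y = x" unfolding is_join_def by (meson order.antisym)
qed

lemma Join_is: "has_ne_joins TYPE('a::order) \<Longrightarrow> S \<noteq> {} \<Longrightarrow> is_join S (Join (S::'a set))"
  unfolding has_ne_joins_def using Join_eq by metis

lemma Join_upper: "has_ne_joins TYPE('a::order) \<Longrightarrow> (y::'a) \<in> S \<Longrightarrow> y \<le> Join S"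
  using Join_is[of S] unfolding is_join_def by blast

lemma Join_least: "has_ne_joins TYPE('a::order) \<Longrightarrow> S \<noteq> {} \<Longrightarrow> (\<And>y. y \<in> S \<Longrightarrow> y \<le> z) \<Longrightarrow> Join S \<le> (z::'a)"
  using Join_is[of S] unfolding is_join_def by blast

lemma Join_pair_le: "(a::'a::order) \<le> b \<Longrightarrow> Join {a, b} = b"
  by (rule Join_eq) (auto simp: is_join_def)

lemma Join_single: "Join {b::'a::order} = b"
  by (rule Join_eq) (auto simp: is_join_def)

lemma precn_Suc: "precn act F (Suc n) a b \<longleftrightarrow> (\<exists>c. prec1 act F a c \<and> precn act F n c b)"
  unfolding precn_def
proof
  assume "(prec1 act F ^^ Suc n) a b"
  then show "\<exists>c. prec1 act F a c \<and> (prec1 act F ^^ n) c b" by (rule relpowp_Suc_D2)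
next
  assume "\<exists>c. prec1 act F a c \<and> (prec1 act F ^^ n) c b"
  then obtain c where "prec1 act F a c" "(prec1 act F ^^ n) c b" by blast
  then show "(prec1 act F ^^ Suc n) a b" by (rule relpowp_Suc_I2)
qed

lemma precn_1: "precn act F (Suc 0) = prec1 act F"
  unfolding precn_def by (fact relpowp_Suc_0)

lemma precn_0: "precn act F 0 a b \<longleftrightarrow> a = b"
  unfolding precn_def by simp

locale qm =
  fixes mult :: "'q::order \<Rightarrow> 'q \<Rightarrow> 'q" and e :: 'q and act :: "'q \<Rightarrow> 'm::order \<Rightarrow> 'm"
  assumes Q: "quantale mult e" and M: "qmodule mult e act"
begin

lemma Qall: "has_ne_joins TYPE('q) \<and> (\<forall>x. x \<le> e) \<and>
     (\<forall>a b. mult a b = mult b a) \<and>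
     (\<forall>a b c. mult (mult a b) c = mult a (mult b c)) \<and>
     (\<forall>a. mult e a = a) \<and>
     (\<forall>a S. S \<noteq> {} \<longrightarrow> mult a (Join S) = Join (mult a ` S))"
  using Q unfolding quantale_def .
lemma Mall: "has_ne_joins TYPE('m) \<and>
     (\<forall>a b m. act (mult a b) m = act a (act b m)) \<and>
     (\<forall>m. act e m = m) \<and>
     (\<forall>S m. S \<noteq> {} \<longrightarrow> act (Join S) m = Join ((\<lambda>a. act a m) ` S)) \<and>
     (\<forall>a T. T \<noteq> {} \<longrightarrow> act a (Join T) = Join (act a ` T))"
  using M unfolding qmodule_def .
lemma hq: "has_ne_joins TYPE('q)" using Qall by (rule conjunct1)
lemma hm: "has_ne_joins TYPE('m)" using Mall by (rule conjunct1)
lemma comm: "mult a b = mult b a" using Qall[THEN conjunct2, THEN conjunct2, THEN conjunct1] by metis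
lemma assoc: "mult (mult a b) c = mult a (mult b c)" using Qall[THEN conjunct2, THEN conjunct2, THEN conjunct2, THEN conjunct1] by metis
lemma unitl: "mult e a = a" using Qall[THEN conjunct2, THEN conjunct2, THEN conjunct2, THEN conjunct2, THEN conjunct1] by metis
lemma le_e: "x \<le> e" using Qall[THEN conjunct2, THEN conjunct1] by metis
lemma distq: "S \<noteq> {} \<Longrightarrow> mult a (Join S) = Join (mult a ` S)" using Qall[THEN conjunct2, THEN conjunct2, THEN conjunct2, THEN conjunct2, THEN conjunct2] by metis
lemma act_mult: "act (mult a b) m = act a (act b m)" using Mall[THEN conjunct2, THEN conjunct1] by metis
lemma act_e: "act e m = m" using Mall[THEN conjunct2, THEN conjunct2, THEN conjunct1] by metis
lemma dist1: "S \<noteq> {} \<Longrightarrow> act (Join S) m = Join ((\<lambda>a. act a m) ` S)" using Mall[THEN conjunct2, THEN conjunct2, THEN conjunct2, THEN conjunct1] by metis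
lemma dist2: "T \<noteq> {} \<Longrightarrow> act a (Join T) = Join (act a ` T)" using Mall[THEN conjunct2, THEN conjunct2, THEN conjunct2, THEN conjunct2] by metis

lemma mult_mono: "a \<le> b \<Longrightarrow> mult c a \<le> mult c b"
proof -
  assume "a \<le> b"
  then have "mult c b = mult c (Join {a,b})" by (simp add: Join_pair_le)
  also have "\<dots> = Join {mult c a, mult c b}" using distq[of "{a,b}" c] by simp
  finally show ?thesis using Join_upper[OF hq, of "mult c a" "{mult c a, mult c b}"] by simp
qed

lemma mult_mono2: "a \<le> x \<Longrightarrow> b \<le> y \<Longrightarrow> mult a b \<le> mult x y"
proof -
  assume h: "a \<le> x" "b \<le> y"
  have "mult a b \<le> mult a y" using mult_mono[OF h(2)] .
  also have "\<dots> = mult y a" by (rule comm)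
  also have "\<dots> \<le> mult y x" using mult_mono[OF h(1)] .
  also have "\<dots> = mult x y" by (rule comm)
  finally show ?thesis .
qed

lemma act_mono2: "m \<le> n \<Longrightarrow> act s m \<le> act s n"
proof -
  assume "m \<le> n"
  then have "act s n = act s (Join {m,n})" by (simp add: Join_pair_le)
  also have "\<dots> = Join {act s m, act s n}" using dist2[of "{m,n}" s] by simp
  finally show ?thesis using Join_upper[OF hm, of "act s m" "{act s m, act s n}"] by simp
qed

lemma act_mono1: "s \<le> t \<Longrightarrow> act s m \<le> act t m"
proof -
  assume "s \<le> t"
  then have "act t m = act (Join {s,t}) m" by (simp add: Join_pair_le)
  also have "\<dots> = Join {act s m, act t m}" using dist1[of "{s,t}" m] by simp
  finally show ?thesis using Join_upper[OF hm, of "act s m" "{act s m, act t m}"] by simp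
qed

lemma act_le: "act s m \<le> m"
  using act_mono1[OF le_e, of s m] act_e by simp

lemma act_comm: "act f (act g z) = act g (act f z)"
proof -
  have "act f (act g z) = act (mult f g) z" by (rule act_mult[symmetric])
  also have "\<dots> = act (mult g f) z" by (subst comm, rule refl)
  also have "\<dots> = act g (act f z)" by (rule act_mult)
  finally show ?thesis .
qed

lemma act_join2: "act (Join {f,g}) z = Join {act f z, act g z}"
  using dist1[of "{f,g}" z] by simp

lemma mf_e: "mfilter mult e F \<Longrightarrow> e \<in> F" unfolding mfilter_def by blast
lemma mf_up: "mfilter mult e F \<Longrightarrow> x \<in> F \<Longrightarrow> x \<le> y \<Longrightarrow> y \<in> F" unfolding mfilter_def by blast
lemma mf_mult: "mfilter mult e F \<Longrightarrow> x \<in> F \<Longrightarrow> y \<in> F \<Longrightarrow> mult x y \<in> F" unfolding mfilter_def by blast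

lemma join_in_inter: "mfilter mult e F \<Longrightarrow> mfilter mult e G \<Longrightarrow> f \<in> F \<Longrightarrow> g \<in> G \<Longrightarrow> Join {f,g} \<in> F \<inter> G"
proof -
  assume a: "mfilter mult e F" "mfilter mult e G" "f \<in> F" "g \<in> G"
  have "f \<le> Join {f,g}" "g \<le> Join {f,g}" by (auto intro: Join_upper[OF hq])
  then show ?thesis using mf_up[OF a(1) a(3)] mf_up[OF a(2) a(4)] by blast
qed

lemma mfsum_mf: "mfilter mult e (mfsum mult e F G)"
  unfolding mfilter_def
proof (intro conjI allI impI)
  show "e \<in> mfsum mult e F G" unfolding mfsum_def using mf_e by blast
  show "x \<in> mfsum mult e F G \<Longrightarrow> x \<le> y \<Longrightarrow> y \<in> mfsum mult e F G" for x y
    unfolding mfsum_def using mf_up by blast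
  show "x \<in> mfsum mult e F G \<Longrightarrow> y \<in> mfsum mult e F G \<Longrightarrow> mult x y \<in> mfsum mult e F G" for x y
    unfolding mfsum_def using mf_mult by blast
qed

lemma mfsum_sup: "F \<union> G \<subseteq> mfsum mult e F G"
  unfolding mfsum_def by blast

lemma mfsum_comm: "mfsum mult e G F = mfsum mult e F G"
  unfolding mfsum_def by (simp add: Un_commute)

lemma mfsum_elem:
  assumes F: "mfilter mult e F" and G: "mfilter mult e G" and s: "s \<in> mfsum mult e F G"
  shows "\<exists>f\<in>F. \<exists>g\<in>G. mult f g \<le> s"
proof -
  define S where "S = {x. \<exists>f\<in>F. \<exists>g\<in>G. mult f g \<le> x}"
  have "mfilter mult e S"
    unfolding mfilter_def
  proof (intro conjI allI impI)
    have "mult e e \<le> e" by (simp only: unitl order_refl)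
    then show "e \<in> S" unfolding S_def using mf_e[OF F] mf_e[OF G] by blast
    show "x \<in> S \<Longrightarrow> x \<le> y \<Longrightarrow> y \<in> S" for x y
    proof -
      assume "x \<in> S" "x \<le> y"
      then obtain f g where "f \<in> F" "g \<in> G" "mult f g \<le> x" unfolding S_def by blast
      moreover have "mult f g \<le> y" using calculation(3) \<open>x \<le> y\<close> by (rule order.trans)
      ultimately show "y \<in> S" unfolding S_def by blast
    qed
    show "x \<in> S \<Longrightarrow> y \<in> S \<Longrightarrow> mult x y \<in> S" for x y
    proof -
      assume "x \<in> S" "y \<in> S"
      then obtain f1 g1 f2 g2 where h: "f1 \<in> F" "g1 \<in> G" "f2 \<in> F" "g2 \<in> G"
        "mult f1 g1 \<le> x" "mult f2 g2 \<le> y" unfolding S_def by blast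
      have "mult (mult f1 f2) (mult g1 g2) = mult f1 (mult f2 (mult g1 g2))" by (rule assoc)
      also have "\<dots> = mult f1 (mult (mult f2 g1) g2)" by (simp only: assoc)
      also have "mult f2 g1 = mult g1 f2" by (rule comm)
      also have "mult f1 (mult (mult g1 f2) g2) = mult (mult f1 g1) (mult f2 g2)" by (simp only: assoc)
      finally have "mult (mult f1 f2) (mult g1 g2) = mult (mult f1 g1) (mult f2 g2)" .
      also have "\<dots> \<le> mult x y" using mult_mono2[OF h(5) h(6)] .
      finally have "mult (mult f1 f2) (mult g1 g2) \<le> mult x y" .
      moreover have "mult f1 f2 \<in> F" using mf_mult[OF F h(1) h(3)] .
      moreover have "mult g1 g2 \<in> G" using mf_mult[OF G h(2) h(4)] .
      ultimately show ?thesis unfolding S_def by blast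
    qed
  qed
  moreover have "F \<union> G \<subseteq> S"
  proof
    fix x assume "x \<in> F \<union> G"
    then show "x \<in> S"
    proof
      assume "x \<in> F"
      moreover have "mult x e \<le> x" by (simp only: comm[of x e] unitl order_refl)
      ultimately show "x \<in> S" unfolding S_def using mf_e[OF G] by blast
    next
      assume "x \<in> G"
      moreover have "mult e x \<le> x" by (simp only: unitl order_refl)
      ultimately show "x \<in> S" unfolding S_def using mf_e[OF F] by blast
    qed
  qed
  ultimately have "mfsum mult e F G \<subseteq> S" unfolding mfsum_def by blast
  then show ?thesis using s unfolding S_def by blast
qed

definition Lc :: "'q set \<Rightarrow> 'm \<Rightarrow> 'm" where
  "Lc F b = Join {c. \<exists>s\<in>F. act s c \<le> b}"

lemma good_ne: "e \<in> F \<Longrightarrow> {c. \<exists>s\<in>F. act s c \<le> b} \<noteq> {}"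
proof -
  assume "e \<in> F"
  moreover have "act e b \<le> b" by (simp only: act_e order_refl)
  ultimately show ?thesis by blast
qed

lemma Lc_good: "s \<in> F \<Longrightarrow> act s c \<le> b \<Longrightarrow> c \<le> Lc F b"
  unfolding Lc_def by (rule Join_upper[OF hm]) blast

lemma le_Lc: "e \<in> F \<Longrightarrow> b \<le> Lc F b"
proof -
  assume "e \<in> F"
  moreover have "act e b \<le> b" by (simp only: act_e order_refl)
  ultimately show ?thesis by (rule Lc_good)
qed

lemma Lc_mono: "e \<in> F \<Longrightarrow> b \<le> b' \<Longrightarrow> Lc F b \<le> Lc F b'"
proof -
  assume e: "e \<in> F" and bb: "b \<le> b'"
  show ?thesis unfolding Lc_def[of F b]
  proof (rule Join_least[OF hm good_ne[OF e]])
    fix c assume "c \<in> {c. \<exists>s\<in>F. act s c \<le> b}"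
    then obtain s where s: "s \<in> F" "act s c \<le> b" by blast
    have "act s c \<le> b'" using s(2) bb by (rule order.trans)
    then show "c \<le> Lc F b'" using s(1) by (rule Lc_good[rotated])
  qed
qed

lemma Lc_monoF: "e \<in> F \<Longrightarrow> F \<subseteq> F' \<Longrightarrow> Lc F b \<le> Lc F' b"
proof -
  assume e: "e \<in> F" and FF: "F \<subseteq> F'"
  show ?thesis unfolding Lc_def[of F b]
  proof (rule Join_least[OF hm good_ne[OF e]])
    fix c assume "c \<in> {c. \<exists>s\<in>F. act s c \<le> b}"
    then obtain s where s: "s \<in> F'" "act s c \<le> b" using FF by blast
    then show "c \<le> Lc F' b" by (rule Lc_good)
  qed
qed

lemma prec1_iff: "e \<in> F \<Longrightarrow> prec1 act F a b \<longleftrightarrow> a \<le> Lc F b"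
proof
  assume e: "e \<in> F" and "prec1 act F a b"
  then obtain I :: "('m \<times> 'q) set" and as s where h: "I \<noteq> {}" "a \<le> Join (as ` I)"
    "\<forall>i\<in>I. s i \<in> F \<and> act (s i) (as i) \<le> b" unfolding prec1_def by blast
  have "Join (as ` I) \<le> Lc F b"
  proof (rule Join_least[OF hm])
    show "as ` I \<noteq> {}" using h(1) by blast
    fix y assume "y \<in> as ` I"
    then obtain i where i: "i \<in> I" "y = as i" by blast
    then have "s i \<in> F" "act (s i) y \<le> b" using h(3) by auto
    then show "y \<le> Lc F b" by (rule Lc_good)
  qed
  then show "a \<le> Lc F b" using h(2) by (rule order.trans[rotated])
next
  assume e: "e \<in> F" and a: "a \<le> Lc F b"
  define I where "I = {p :: 'm \<times> 'q. snd p \<in> F \<and> act (snd p) (fst p) \<le> b}"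
  have im: "fst ` I = {c. \<exists>s\<in>F. act s c \<le> b}"
  proof (rule set_eqI)
    fix c
    show "c \<in> fst ` I \<longleftrightarrow> c \<in> {c. \<exists>s\<in>F. act s c \<le> b}"
    proof
      assume "c \<in> fst ` I" then show "c \<in> {c. \<exists>s\<in>F. act s c \<le> b}" unfolding I_def by auto
    next
      assume "c \<in> {c. \<exists>s\<in>F. act s c \<le> b}"
      then obtain s where "s \<in> F" "act s c \<le> b" by blast
      then have "(c, s) \<in> I" unfolding I_def by simp
      then show "c \<in> fst ` I" by (rule rev_image_eqI) simp
    qed
  qed
  have "act e b \<le> b" by (simp only: act_e order_refl)
  then have "(b, e) \<in> I" unfolding I_def using e by simp
  then have "I \<noteq> {}" by blast
  moreover have "a \<le> Join (fst ` I)" using a unfolding im Lc_def .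
  moreover have "\<forall>i\<in>I. snd i \<in> F \<and> act (snd i) (fst i) \<le> b" unfolding I_def by blast
  ultimately show "prec1 act F a b" unfolding prec1_def by blast
qed

lemma prec1_monoF: "F \<subseteq> F' \<Longrightarrow> prec1 act F a b \<Longrightarrow> prec1 act F' a b"
  unfolding prec1_def by blast

lemma precn_monoF: "F \<subseteq> F' \<Longrightarrow> precn act F n a b \<Longrightarrow> precn act F' n a b"
proof (induction n arbitrary: a)
  case 0 then show ?case by (simp add: precn_0)
next
  case (Suc n)
  then obtain c where "prec1 act F a c" "precn act F n c b" unfolding precn_Suc by blast
  then have "prec1 act F' a c" "precn act F' n c b" using Suc prec1_monoF by blast+
  then show ?case unfolding precn_Suc by blast
qed

lemma precn_refl: "e \<in> F \<Longrightarrow> precn act F n b b"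
proof (induction n)
  case 0 then show ?case by (simp add: precn_0)
next
  case (Suc n)
  have "prec1 act F b b" using le_Lc[OF Suc.prems] prec1_iff[OF Suc.prems] by blast
  then show ?case unfolding precn_Suc using Suc by blast
qed

lemma precn_down: "e \<in> F \<Longrightarrow> a' \<le> a \<Longrightarrow> precn act F (Suc n) a b \<Longrightarrow> precn act F (Suc n) a' b"
proof -
  assume e: "e \<in> F" and aa: "a' \<le> a" and p: "precn act F (Suc n) a b"
  then obtain c where c: "a \<le> Lc F c" "precn act F n c b" unfolding precn_Suc prec1_iff[OF e] by blast
  have "a' \<le> Lc F c" using aa c(1) by (rule order.trans)
  then show ?thesis unfolding precn_Suc prec1_iff[OF e] using c(2) by blast
qed

lemma precn_join2: "e \<in> F \<Longrightarrow> precn act F n a1 b \<Longrightarrow> precn act F n a2 b \<Longrightarrow> precn act F n (Join {a1,a2}) b"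
proof (induction n arbitrary: a1 a2)
  case 0 then show ?case by (simp add: precn_0 Join_single)
next
  case (Suc n)
  have e: "e \<in> F" by fact
  obtain c1 where h1: "a1 \<le> Lc F c1" "precn act F n c1 b" using Suc.prems(2) unfolding precn_Suc prec1_iff[OF e] by blast
  obtain c2 where h2: "a2 \<le> Lc F c2" "precn act F n c2 b" using Suc.prems(3) unfolding precn_Suc prec1_iff[OF e] by blast
  define c where "c = Join {c1, c2}"
  have "c1 \<le> c" "c2 \<le> c" unfolding c_def by (auto intro: Join_upper[OF hm])
  then have L: "Lc F c1 \<le> Lc F c" "Lc F c2 \<le> Lc F c" using Lc_mono[OF e] by auto
  have "Join {a1,a2} \<le> Lc F c"
  proof (rule Join_least[OF hm])
    show "{a1, a2} \<noteq> {}" by blast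
    fix y assume "y \<in> {a1, a2}"
    then show "y \<le> Lc F c"
    proof
      assume "y = a1" then show ?thesis using h1(1) L(1) by (metis order.trans)
    next
      assume "y \<in> {a2}" then show ?thesis using h2(1) L(2) by (metis order.trans singletonD)
    qed
  qed
  moreover have "precn act F n c b" unfolding c_def using Suc.IH[OF e h1(2) h2(2)] .
  ultimately show ?case unfolding precn_Suc prec1_iff[OF e] by blast
qed

lemma shrink_set:
  fixes x :: 'm and S :: "'m set"
  assumes sh: "shrinkable TYPE('m)" and S: "S \<noteq> {}" and x: "x \<le> Join S"
  shows "\<exists>T. T \<noteq> {} \<and> x = Join T \<and> (\<forall>y\<in>T. \<exists>S0. S0 \<subseteq> S \<and> finite S0 \<and> S0 \<noteq> {} \<and> y \<le> Join S0)"
proof -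
  have xi: "x \<le> Join (id ` S)" using x by simp
  have A: "\<forall>(x::'m) (I::'m set) xs. I \<noteq> {} \<longrightarrow> x \<le> Join (xs ` I) \<longrightarrow>
        (\<exists>(J::'m set) ys. J \<noteq> {} \<and> x = Join (ys ` J) \<and> (\<forall>j\<in>J. le_star (ys j) I xs))"
    using sh unfolding shrinkable_def .
  from A[rule_format, OF S xi] obtain J :: "'m set" and ys where h: "J \<noteq> {}" "x = Join (ys ` J)" "\<forall>j\<in>J. le_star (ys j) S id"
    by (elim exE conjE) blast
  have "\<forall>y\<in>ys ` J. \<exists>S0. S0 \<subseteq> S \<and> finite S0 \<and> S0 \<noteq> {} \<and> y \<le> Join S0"
  proof
    fix y assume "y \<in> ys ` J"
    then obtain j where j: "j \<in> J" "y = ys j" by blast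
    then have "le_star (ys j) S id" using h(3) by blast
    then obtain I0 where I0: "I0 \<subseteq> S" "finite I0" "I0 \<noteq> {}" "ys j \<le> Join (id ` I0)"
      unfolding le_star_def by blast
    have "y \<le> Join I0" using I0(4) unfolding j(2) by simp
    then show "\<exists>S0. S0 \<subseteq> S \<and> finite S0 \<and> S0 \<noteq> {} \<and> y \<le> Join S0" using I0(1-3) by blast
  qed
  moreover have "ys ` J \<noteq> {}" using h(1) by blast
  ultimately show ?thesis using h(2) by (intro exI[of _ "ys ` J"]) blast
qed

lemma finite_prod:
  assumes F: "mfilter mult e F"
  shows "finite S0 \<Longrightarrow> S0 \<noteq> {} \<Longrightarrow> \<forall>c\<in>S0. \<exists>s\<in>F. act s c \<le> m \<Longrightarrow> \<exists>f\<in>F. \<forall>c\<in>S0. act f c \<le> m"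
proof (induction S0 rule: finite_ne_induct)
  case (singleton x) then show ?case by auto
next
  case (insert x S0)
  then obtain f where f: "f \<in> F" "\<forall>c\<in>S0. act f c \<le> m" by blast
  obtain s where s: "s \<in> F" "act s x \<le> m" using insert by blast
  have "mult f s \<in> F" using mf_mult[OF F f(1) s(1)] .
  moreover have "act (mult f s) x \<le> m"
  proof -
    have "act (mult f s) x = act f (act s x)" by (rule act_mult)
    also have "\<dots> \<le> act s x" by (rule act_le)
    also have "\<dots> \<le> m" by (rule s(2))
    finally show ?thesis .
  qed
  moreover have "\<forall>c\<in>S0. act (mult f s) c \<le> m"
  proof
    fix c assume c: "c \<in> S0"
    have "act (mult f s) c = act s (act f c)" unfolding act_mult by (rule act_comm)
    also have "\<dots> \<le> act f c" by (rule act_le)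
    also have "\<dots> \<le> m" using f(2) c by blast
    finally show "act (mult f s) c \<le> m" .
  qed
  ultimately show ?case by blast
qed

lemma lemR:
  assumes F: "mfilter mult e F" and sh: "shrinkable TYPE('m)" and x: "x \<le> Lc F m"
  shows "\<exists>T. T \<noteq> {} \<and> x = Join T \<and> (\<forall>t\<in>T. \<exists>f\<in>F. act f t \<le> m)"
proof -
  obtain T where T: "T \<noteq> {}" "x = Join T"
    "\<forall>y\<in>T. \<exists>S0. S0 \<subseteq> {c. \<exists>s\<in>F. act s c \<le> m} \<and> finite S0 \<and> S0 \<noteq> {} \<and> y \<le> Join S0"
    using shrink_set[OF sh good_ne[OF mf_e[OF F]] x[unfolded Lc_def]] by (elim exE conjE) blast
  have "\<exists>f\<in>F. act f t \<le> m" if t: "t \<in> T" for t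
  proof -
    obtain S0 where S0: "S0 \<subseteq> {c. \<exists>s\<in>F. act s c \<le> m}" "finite S0" "S0 \<noteq> {}" "t \<le> Join S0"
      using T t by blast
    then have "\<forall>c\<in>S0. \<exists>s\<in>F. act s c \<le> m" by blast
    then obtain f where f: "f \<in> F" "\<forall>c\<in>S0. act f c \<le> m" using finite_prod[OF F S0(2,3)] by blast
    have "act f t \<le> act f (Join S0)" using S0(4) by (rule act_mono2)
    also have "\<dots> = Join (act f ` S0)" using S0(3) by (rule dist2)
    also have "\<dots> \<le> m"
    proof (rule Join_least[OF hm])
      show "act f ` S0 \<noteq> {}" using S0(3) by blast
      fix w assume "w \<in> act f ` S0" then show "w \<le> m" using f(2) by blast
    qed
    finally show ?thesis using f(1) by blast
  qed
  then show ?thesis using T by blast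
qed

lemma lemZ:
  assumes F: "mfilter mult e F" and G: "mfilter mult e G" and sh: "shrinkable TYPE('m)"
    and x1: "x \<le> Lc F m" and x2: "x \<le> Lc G y"
  defines "Z \<equiv> {z. \<exists>f\<in>F. \<exists>g\<in>G. act f z \<le> m \<and> act g z \<le> y}"
  shows "Z \<noteq> {} \<and> x \<le> Join Z"
proof -
  from lemR[OF F sh x1] obtain T where T: "T \<noteq> {}" "x = Join T" "\<forall>t\<in>T. \<exists>f\<in>F. act f t \<le> m"
    by blast
  have sub: "\<exists>T2. T2 \<noteq> {} \<and> T2 \<subseteq> Z \<and> t = Join T2" if t: "t \<in> T" for t
  proof -
    obtain f where f: "f \<in> F" "act f t \<le> m" using T t by blast
    have "t \<le> x" unfolding T(2) using t by (rule Join_upper[OF hm])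
    then have "t \<le> Lc G y" using x2 by (rule order.trans)
    from lemR[OF G sh this] obtain T2 where T2: "T2 \<noteq> {}" "t = Join T2" "\<forall>z\<in>T2. \<exists>g\<in>G. act g z \<le> y"
      by blast
    have "T2 \<subseteq> Z"
    proof
      fix z assume z: "z \<in> T2"
      have "z \<le> t" unfolding T2(2) using z by (rule Join_upper[OF hm])
      then have "act f z \<le> act f t" by (rule act_mono2)
      then have "act f z \<le> m" using f(2) by (rule order.trans)
      then show "z \<in> Z" unfolding Z_def using T2(3) z f(1) by blast
    qed
    then show ?thesis using T2 by blast
  qed
  have "Z \<noteq> {}" using sub T(1) by blast
  moreover have "x \<le> Join Z"
    unfolding T(2)
  proof (rule Join_least[OF hm T(1)])
    fix t assume "t \<in> T"
    then obtain T2 where T2: "T2 \<noteq> {}" "T2 \<subseteq> Z" "t = Join T2" using sub by blast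
    show "t \<le> Join Z" unfolding T2(3)
    proof (rule Join_least[OF hm T2(1)])
      fix z assume "z \<in> T2" then have "z \<in> Z" using T2(2) by blast
      then show "z \<le> Join Z" by (rule Join_upper[OF hm])
    qed
  qed
  ultimately show ?thesis by blast
qed

lemma lemK:
  assumes F: "mfilter mult e F" and G: "mfilter mult e G" and sh: "shrinkable TYPE('m)"
    and x1: "x \<le> Lc F m" and x2: "x \<le> Lc G y"
  shows "\<exists>m'. x \<le> Lc (F \<inter> G) m' \<and> m' \<le> Join {m, y} \<and> m' \<le> Lc G y"
proof -
  define Z where "Z = {z. \<exists>f\<in>F. \<exists>g\<in>G. act f z \<le> m \<and> act g z \<le> y}"
  have Z: "Z \<noteq> {}" "x \<le> Join Z" using lemZ[OF F G sh x1 x2] unfolding Z_def by blast+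
  define W where "W = {w. (w \<le> m \<and> w \<le> Lc G y) \<or> w \<le> y}"
  have eG: "e \<in> G" using mf_e[OF G] .
  have Wne: "W \<noteq> {}" unfolding W_def by blast
  have yL: "y \<le> Lc G y" using le_Lc[OF eG] .
  have mJ: "m \<le> Join {m,y}" and yJ: "y \<le> Join {m,y}" by (auto intro: Join_upper[OF hm])
  have "Join W \<le> Join {m, y}"
  proof (rule Join_least[OF hm Wne])
    fix w assume "w \<in> W"
    then have "w \<le> m \<or> w \<le> y" unfolding W_def by blast
    then show "w \<le> Join {m,y}" using mJ yJ order.trans by blast
  qed
  moreover have "Join W \<le> Lc G y"
  proof (rule Join_least[OF hm Wne])
    fix w assume "w \<in> W"
    then have "w \<le> Lc G y \<or> w \<le> y" unfolding W_def by blast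
    then show "w \<le> Lc G y" using yL order.trans by blast
  qed
  moreover have "Join Z \<le> Lc (F \<inter> G) (Join W)"
  proof (rule Join_least[OF hm Z(1)])
    fix z assume "z \<in> Z"
    then obtain f g where fg: "f \<in> F" "g \<in> G" "act f z \<le> m" "act g z \<le> y" unfolding Z_def by blast
    have "act g (act f z) = act f (act g z)" by (rule act_comm)
    also have "\<dots> \<le> act g z" by (rule act_le)
    also have "\<dots> \<le> y" by (rule fg(4))
    finally have "act f z \<le> Lc G y" using fg(2) by (intro Lc_good)
    then have "act f z \<in> W" "act g z \<in> W" unfolding W_def using fg by auto
    then have "act (Join {f,g}) z \<le> Join W" unfolding act_join2
      by (intro Join_least[OF hm]) (auto intro: Join_upper[OF hm])
    then show "z \<le> Lc (F \<inter> G) (Join W)" using join_in_inter[OF F G fg(1,2)] by (intro Lc_good)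
  qed
  moreover have "x \<le> Lc (F \<inter> G) (Join W)" using Z(2) calculation(3) by (rule order.trans)
  ultimately show ?thesis by blast
qed

lemma lemP:
  assumes F: "mfilter mult e F" and G: "mfilter mult e G" and sh: "shrinkable TYPE('m)"
  shows "precn act F (Suc n) x y \<Longrightarrow> prec1 act G x y \<Longrightarrow> precn act (F \<inter> G) (Suc n) x y"
proof (induction n arbitrary: x)
  have eF: "e \<in> F" and eG: "e \<in> G" and eFG: "e \<in> F \<inter> G" using mf_e F G by auto
  case 0
  have x1: "x \<le> Lc F y" using 0(1) unfolding precn_1 prec1_iff[OF eF] .
  have x2: "x \<le> Lc G y" using 0(2) unfolding prec1_iff[OF eG] .
  from lemK[OF F G sh x1 x2] obtain m' where m': "x \<le> Lc (F \<inter> G) m'" "m' \<le> Join {y, y}" by blast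
  have "m' \<le> y" using m'(2) by (simp add: Join_single)
  then have "Lc (F \<inter> G) m' \<le> Lc (F \<inter> G) y" by (rule Lc_mono[OF eFG])
  then have "x \<le> Lc (F \<inter> G) y" using m'(1) by (rule order.trans[rotated])
  then show ?case unfolding precn_1 prec1_iff[OF eFG] .
next
  have eF: "e \<in> F" and eG: "e \<in> G" and eFG: "e \<in> F \<inter> G" using mf_e F G by auto
  case (Suc n)
  obtain m where m: "x \<le> Lc F m" "precn act F (Suc n) m y"
    using Suc.prems(1) unfolding precn_Suc[of act F "Suc n"] prec1_iff[OF eF] by blast
  have xG: "x \<le> Lc G y" using Suc.prems(2) unfolding prec1_iff[OF eG] .
  from lemK[OF F G sh m(1) xG] obtain m' where m': "x \<le> Lc (F \<inter> G) m'" "m' \<le> Join {m, y}" "m' \<le> Lc G y"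
    by blast
  have "precn act F (Suc n) (Join {m, y}) y" using precn_join2[OF eF m(2) precn_refl[OF eF]] .
  then have "precn act F (Suc n) m' y" by (rule precn_down[OF eF m'(2)])
  moreover have "prec1 act G m' y" using m'(3) unfolding prec1_iff[OF eG] .
  ultimately have "precn act (F \<inter> G) (Suc n) m' y" by (rule Suc.IH)
  then show ?case using m'(1) unfolding precn_Suc[of act "F \<inter> G" "Suc n"] prec1_iff[OF eFG] by blast
qed

lemma lemD:
  assumes F: "mfilter mult e F" and G: "mfilter mult e G" and sh: "shrinkable TYPE('m)"
    and a: "a \<le> Lc (mfsum mult e F G) b"
  shows "\<exists>d. d \<le> a \<and> a \<le> Lc F d \<and> d \<le> Lc G b"
proof -
  obtain T where T: "T \<noteq> {}" "a = Join T" "\<forall>t\<in>T. \<exists>s\<in>mfsum mult e F G. act s t \<le> b"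
    using lemR[OF mfsum_mf sh a] by blast
  define D where "D = {w. w \<le> a \<and> w \<le> Lc G b}"
  have ex: "\<exists>f\<in>F. act f t \<in> D" if t: "t \<in> T" for t
  proof -
    obtain s where s: "s \<in> mfsum mult e F G" "act s t \<le> b" using T t by blast
    obtain f g where fg: "f \<in> F" "g \<in> G" "mult f g \<le> s" using mfsum_elem[OF F G s(1)] by blast
    have "act g (act f t) = act f (act g t)" by (rule act_comm)
    also have "\<dots> = act (mult f g) t" by (rule act_mult[symmetric])
    also have "\<dots> \<le> act s t" using fg(3) by (rule act_mono1)
    also have "\<dots> \<le> b" by (rule s(2))
    finally have "act f t \<le> Lc G b" using fg(2) by (intro Lc_good)
    moreover have "t \<le> a" unfolding T(2) using t by (rule Join_upper[OF hm])
    then have "act f t \<le> a" using act_le by (rule order.trans[rotated])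
    ultimately show ?thesis using fg unfolding D_def by blast
  qed
  have Dne: "D \<noteq> {}" using ex T(1) by blast
  have "Join D \<le> a" by (rule Join_least[OF hm Dne]) (auto simp: D_def)
  moreover have "Join D \<le> Lc G b" by (rule Join_least[OF hm Dne]) (auto simp: D_def)
  moreover have "a \<le> Lc F (Join D)" unfolding T(2)
  proof (rule Join_least[OF hm T(1)])
    fix t assume "t \<in> T"
    then obtain f where f: "f \<in> F" "act f t \<in> D" using ex by blast
    have "act f t \<le> Join D" using f(2) by (rule Join_upper[OF hm])
    then show "t \<le> Lc F (Join D)" using f(1) by (intro Lc_good)
  qed
  ultimately show ?thesis by blast
qed

lemma to_d:
  assumes F: "mfilter mult e F" and G: "mfilter mult e G" and sh: "shrinkable TYPE('m)"
    and os: "one_step act (mfsum mult e F G)" and p: "prec act F a b"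
  shows "\<exists>d n. prec1 act F a d \<and> precn act (F \<inter> G) (Suc n) d b"
proof -
  have eF: "e \<in> F" and eG: "e \<in> G" using mf_e F G by auto
  have eS: "e \<in> mfsum mult e F G" using mf_e[OF mfsum_mf] .
  from p obtain n0 where n0: "n0 \<ge> 1" "precn act F n0 a b" unfolding prec_def by blast
  from n0(1) obtain n where nn: "n0 = Suc n" by (cases n0) auto
  have n: "precn act F (Suc n) a b" using n0(2) unfolding nn .
  have FS: "F \<subseteq> mfsum mult e F G" using mfsum_sup[of F G] by (rule subset_trans[rotated]) simp
  have "precn act (mfsum mult e F G) (Suc n) a b" using precn_monoF[OF FS n] .
  then have "prec act (mfsum mult e F G) a b" unfolding prec_def by (intro exI[of _ "Suc n"]) simp
  moreover have "\<forall>a b. prec act (mfsum mult e F G) a b \<longrightarrow> prec1 act (mfsum mult e F G) a b"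
    using os unfolding one_step_def by (rule conjunct2)
  ultimately have "prec1 act (mfsum mult e F G) a b" by blast
  then have "a \<le> Lc (mfsum mult e F G) b" unfolding prec1_iff[OF eS] .
  from lemD[OF F G sh this] obtain d where d: "d \<le> a" "a \<le> Lc F d" "d \<le> Lc G b" by blast
  have "precn act F (Suc n) d b" using precn_down[OF eF d(1) n] .
  moreover have "prec1 act G d b" using d(3) unfolding prec1_iff[OF eG] .
  ultimately have "precn act (F \<inter> G) (Suc n) d b" by (rule lemP[OF F G sh])
  moreover have "prec1 act F a d" using d(2) unfolding prec1_iff[OF eF] .
  ultimately show ?thesis by blast
qed

lemma triv_le:
  assumes tr: "\<forall>s\<in>K. \<forall>m. act s m = m" and eK: "e \<in> K"
  shows "precn act K n x y \<Longrightarrow> x \<le> y"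
proof (induction n arbitrary: x)
  case 0 then show ?case by (simp add: precn_0)
next
  case (Suc n)
  then obtain c where c: "x \<le> Lc K c" "precn act K n c y" unfolding precn_Suc prec1_iff[OF eK] by blast
  have "Lc K c \<le> c" unfolding Lc_def
  proof (rule Join_least[OF hm good_ne[OF eK]])
    fix z assume "z \<in> {c'. \<exists>s\<in>K. act s c' \<le> c}"
    then obtain s where "s \<in> K" "act s z \<le> c" by blast
    then show "z \<le> c" using tr by simp
  qed
  then have "x \<le> c" using c(1) by (rule order.trans[rotated])
  then show ?case using Suc.IH[OF c(2)] by (rule order.trans)
qed

lemma partb:
  assumes F: "mfilter mult e F" and G: "mfilter mult e G" and sh: "shrinkable TYPE('m)"
    and os: "one_step act (mfsum mult e F G)" and tr: "\<forall>s\<in>F \<inter> G. \<forall>m. act s m = m"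
  shows "one_step act F"
proof -
  have eF: "e \<in> F" using mf_e F by auto
  have eFG: "e \<in> F \<inter> G" using mf_e F G by auto
  have key: "prec1 act F a b" if p: "prec act F a b" for a b
  proof -
    obtain d n where d: "prec1 act F a d" "precn act (F \<inter> G) (Suc n) d b"
      using to_d[OF F G sh os p] by blast
    have "d \<le> b" using triv_le[OF tr eFG d(2)] .
    then have "Lc F d \<le> Lc F b" by (rule Lc_mono[OF eF])
    moreover have "a \<le> Lc F d" using d(1) unfolding prec1_iff[OF eF] .
    ultimately have "a \<le> Lc F b" by (rule order.trans[rotated])
    then show ?thesis unfolding prec1_iff[OF eF] .
  qed
  have "localizable act F" unfolding localizable_def
  proof
    fix b
    have "\<forall>a. prec act F a b \<longrightarrow> precn act F (Suc 0) a b" unfolding precn_1 using key by blast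
    then show "\<exists>n\<ge>1. \<forall>a. prec act F a b \<longrightarrow> precn act F n a b" by (intro exI[of _ "Suc 0"]) simp
  qed
  then show ?thesis unfolding one_step_def using key by blast
qed

lemma parta:
  assumes F: "mfilter mult e F" and G: "mfilter mult e G" and sh: "shrinkable TYPE('m)"
    and os: "one_step act (mfsum mult e F G)"
    and H: "mfilter mult e H" "localizable act H" "F \<inter> G \<subseteq> H" "H \<subseteq> F"
  shows "localizable act F"
  unfolding localizable_def
proof
  fix b
  have eF: "e \<in> F" using mf_e F by auto
  obtain nb where nb: "nb \<ge> 1" "\<forall>a. prec act H a b \<longrightarrow> precn act H nb a b"
    using H(2) unfolding localizable_def by blast
  have "precn act F (Suc nb) a b" if p: "prec act F a b" for a
  proof -
    obtain d n where d: "prec1 act F a d" "precn act (F \<inter> G) (Suc n) d b"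
      using to_d[OF F G sh os p] by blast
    have "precn act H (Suc n) d b" using precn_monoF[OF H(3) d(2)] .
    then have "prec act H d b" unfolding prec_def by (intro exI[of _ "Suc n"]) simp
    then have "precn act H nb d b" using nb by blast
    then have "precn act F nb d b" using precn_monoF[OF H(4)] by blast
    then show ?thesis unfolding precn_Suc using d(1) by blast
  qed
  then show "\<exists>n\<ge>1. \<forall>a. prec act F a b \<longrightarrow> precn act F n a b" by (intro exI[of _ "Suc nb"]) auto
qed

end

theorem mainTheorem6:
  fixes mult :: "'q::order \<Rightarrow> 'q \<Rightarrow> 'q" and e :: 'q
    and act :: "'q \<Rightarrow> 'm::order \<Rightarrow> 'm"
    and F G :: "'q set"
  assumes "quantale mult e"
    and "qmodule mult e act"
    and "shrinkable TYPE('m)"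
    and "mfilter mult e F" and "mfilter mult e G"
    and "one_step act (mfsum mult e F G)"
  shows "((\<exists>H. mfilter mult e H \<and> localizable act H \<and> F \<inter> G \<subseteq> H \<and> H \<subseteq> F)
            \<longrightarrow> localizable act F)
      \<and> ((\<forall>s\<in>F \<inter> G. \<forall>m. act s m = m) \<longrightarrow> one_step act F \<and> one_step act G)"
proof -
  interpret qm mult e act by (rule qm.intro) (fact assms(1), fact assms(2))
  show ?thesis
  proof (intro conjI impI)
    assume "\<exists>H. mfilter mult e H \<and> localizable act H \<and> F \<inter> G \<subseteq> H \<and> H \<subseteq> F"
    then obtain H where H: "mfilter mult e H" "localizable act H" "F \<inter> G \<subseteq> H" "H \<subseteq> F" by blast
    show "localizable act F" by (rule parta[OF assms(4,5,3,6) H])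
  next
    assume tr: "\<forall>s\<in>F \<inter> G. \<forall>m. act s m = m"
    show "one_step act F" using partb[OF assms(4,5,3,6) tr] .
    have os: "one_step act (mfsum mult e G F)" unfolding mfsum_comm[of G F] by (rule assms(6))
    have tr': "\<forall>s\<in>G \<inter> F. \<forall>m. act s m = m" unfolding Int_commute[of G F] by (rule tr)
    show "one_step act G" by (rule partb[OF assms(5,4,3) os tr'])
  qed
qed

end
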